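(* Let $T$ be a finite rooted tree in which every inner node has at least two children, with node set $V$ and leaf set $L$. Let $S\subseteq V\setminus L$, and let $(\pi,\sigma)$ and $(\pi',\sigma')$ be two pairs of injective maps from $S$ to $L$, each identifying $S$ and having unique request. If $\pi(S)=\pi'(S)$ and $\sigma(S)=\sigma'(S)$, then $\pi=\pi'$ and $\sigma=\sigma'$.
   Context: Every node is its own ancestor and descendant. A pair $(\pi,\sigma)$ of injective maps from $S\subseteq V\setminus L$ to $L$ identifies $S$ if for each $s\in S$, $s$ is the least common ancestor of $\pi(s)$ and $\sigma(s)$. For $s\in S$, a node $x$ is $s$-requested in $(\pi,\sigma)$ if $x$ lies on the path of $T$ from $\pi(s)$ to $\sigma(s)$. The pair has unique request if every node of $T$ is $s$-requested for at most one $s\in S$. *)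

theory Defs
  imports Main
begin

text \<open>A finite rooted tree is given by a finite node set V, a root r \<in> V and a parent
  function; the parent of a non-root node is in V and every node reaches the root by
  following parents (hence the structure is a tree). Only the values of par on V - {r} matter.\<close>

inductive anc :: "'a set \<Rightarrow> 'a \<Rightarrow> ('a \<Rightarrow> 'a) \<Rightarrow> 'a \<Rightarrow> 'a \<Rightarrow> bool"
  for V r par where
  anc_refl: "y \<in> V \<Longrightarrow> anc V r par y y"
| anc_step: "anc V r par x (par y) \<Longrightarrow> y \<in> V \<Longrightarrow> y \<noteq> r \<Longrightarrow> anc V r par x y"

definition rooted_tree :: "'a set \<Rightarrow> 'a \<Rightarrow> ('a \<Rightarrow> 'a) \<Rightarrow> bool" where
  "rooted_tree V r par \<longleftrightarrow> finite V \<and> r \<in> V \<and>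
     (\<forall>v \<in> V - {r}. par v \<in> V) \<and> (\<forall>v \<in> V. anc V r par r v)"

definition children :: "'a set \<Rightarrow> 'a \<Rightarrow> ('a \<Rightarrow> 'a) \<Rightarrow> 'a \<Rightarrow> 'a set" where
  "children V r par x = {v \<in> V - {r}. par v = x}"

definition leaves :: "'a set \<Rightarrow> 'a \<Rightarrow> ('a \<Rightarrow> 'a) \<Rightarrow> 'a set" where
  "leaves V r par = {x \<in> V. children V r par x = {}}"

definition branching :: "'a set \<Rightarrow> 'a \<Rightarrow> ('a \<Rightarrow> 'a) \<Rightarrow> bool" where
  "branching V r par \<longleftrightarrow> (\<forall>x \<in> V - leaves V r par. card (children V r par x) \<ge> 2)"

definition is_lca :: "'a set \<Rightarrow> 'a \<Rightarrow> ('a \<Rightarrow> 'a) \<Rightarrow> 'a \<Rightarrow> 'a \<Rightarrow> 'a \<Rightarrow> bool" where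
  "is_lca V r par c a b \<longleftrightarrow> anc V r par c a \<and> anc V r par c b \<and>
     (\<forall>d. anc V r par d a \<and> anc V r par d b \<longrightarrow> anc V r par d c)"

definition tree_path :: "'a set \<Rightarrow> 'a \<Rightarrow> ('a \<Rightarrow> 'a) \<Rightarrow> 'a \<Rightarrow> 'a \<Rightarrow> 'a set" where
  "tree_path V r par a b = {x \<in> V. (anc V r par x a \<or> anc V r par x b) \<and>
     (\<exists>c. is_lca V r par c a b \<and> anc V r par c x)}"

definition identifies :: "'a set \<Rightarrow> 'a \<Rightarrow> ('a \<Rightarrow> 'a) \<Rightarrow> 'a set \<Rightarrow> ('a \<Rightarrow> 'a) \<Rightarrow> ('a \<Rightarrow> 'a) \<Rightarrow> bool" where
  "identifies V r par S \<pi> \<sigma> \<longleftrightarrow> (\<forall>s \<in> S. is_lca V r par s (\<pi> s) (\<sigma> s))"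

definition requested :: "'a set \<Rightarrow> 'a \<Rightarrow> ('a \<Rightarrow> 'a) \<Rightarrow> ('a \<Rightarrow> 'a) \<Rightarrow> ('a \<Rightarrow> 'a) \<Rightarrow> 'a \<Rightarrow> 'a \<Rightarrow> bool" where
  "requested V r par \<pi> \<sigma> s x \<longleftrightarrow> x \<in> tree_path V r par (\<pi> s) (\<sigma> s)"

definition unique_request :: "'a set \<Rightarrow> 'a \<Rightarrow> ('a \<Rightarrow> 'a) \<Rightarrow> 'a set \<Rightarrow> ('a \<Rightarrow> 'a) \<Rightarrow> ('a \<Rightarrow> 'a) \<Rightarrow> bool" where
  "unique_request V r par S \<pi> \<sigma> \<longleftrightarrow>
     (\<forall>x \<in> V. \<forall>s \<in> S. \<forall>t \<in> S. requested V r par \<pi> \<sigma> s x \<and> requested V r par \<pi> \<sigma> t x \<longrightarrow> s = t)"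

end

theory Submission
  imports Defs
begin

lemma anc_V: "anc V r par x y \<Longrightarrow> x \<in> V \<and> y \<in> V"
  by (induction rule: anc.induct) auto

lemma anc_trans: "anc V r par y z \<Longrightarrow> anc V r par x y \<Longrightarrow> anc V r par x z"
  by (induction rule: anc.induct) (auto intro: anc.intros)

lemma anc_inv: "anc V r par x y \<Longrightarrow> x \<noteq> y \<Longrightarrow> y \<noteq> r \<and> anc V r par x (par y) \<and> y \<in> V"
  by (cases rule: anc.cases) auto

lemma anc_linear: "anc V r par a x \<Longrightarrow> anc V r par b x \<Longrightarrow> anc V r par a b \<or> anc V r par b a"
proof (induction arbitrary: b rule: anc.induct)
  case (anc_refl y)
  then show ?case by auto
next
  case (anc_step x y)
  show ?case
  proof (cases "b = y")
    case True
    then show ?thesis using anc_step by (auto intro: anc.intros)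
  next
    case False
    then show ?thesis using anc_inv[OF anc_step.prems] anc_step.IH by auto
  qed
qed

lemma no_self: "anc V r par x y \<Longrightarrow> x = r \<Longrightarrow> y \<noteq> r \<Longrightarrow> \<not> anc V r par y (par y)"
proof (induction rule: anc.induct)
  case (anc_refl y)
  then show ?case by simp
next
  case (anc_step x y)
  show ?case
  proof
    assume a: "anc V r par y (par y)"
    show False
    proof (cases "par y = r")
      case True
      then show False using a anc_inv[OF a] anc_step by auto
    next
      case pr: False
      show False
      proof (cases "y = par y")
        case True
        then show False using anc_step pr a by (metis anc_V anc_refl)
      next
        case False
        from anc_inv[OF a False] have "anc V r par y (par (par y))" by simp
        moreover have "anc V r par (par y) y"
          using anc_step anc_V by (metis anc.intros)
        ultimately have "anc V r par (par y) (par (par y))" using anc_trans by metis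
        then show False using anc_step pr by auto
      qed
    qed
  qed
qed

lemma anc_antisym:
  assumes "rooted_tree V r par" "anc V r par x y" "anc V r par y x"
  shows "x = y"
proof (rule ccontr)
  assume ne: "x \<noteq> y"
  from anc_inv[OF assms(2) ne] have y: "y \<noteq> r" "anc V r par x (par y)" "y \<in> V" by auto
  have "anc V r par y (par y)" using anc_trans[OF y(2) assms(3)] .
  moreover have "anc V r par r y" using assms(1) y(3) unfolding rooted_tree_def by blast
  ultimately show False using no_self[OF _ refl y(1)] by blast
qed

lemma is_lca_sym: "is_lca V r par c a b = is_lca V r par c b a"
  unfolding is_lca_def by auto

lemma tree_path_sym: "tree_path V r par a b = tree_path V r par b a"
  unfolding tree_path_def is_lca_def by auto

lemma swap:
  "identifies V r par S \<pi> \<sigma> \<Longrightarrow> identifies V r par S \<sigma> \<pi>"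
  "unique_request V r par S \<pi> \<sigma> \<Longrightarrow> unique_request V r par S \<sigma> \<pi>"
  unfolding identifies_def unique_request_def requested_def
  by (simp_all add: is_lca_sym tree_path_sym)

lemma on_path:
  assumes "identifies V r par S \<pi> \<sigma>" "t \<in> S" "v \<in> V" "anc V r par t v"
    "anc V r par v (\<pi> t) \<or> anc V r par v (\<sigma> t)"
  shows "requested V r par \<pi> \<sigma> t v"
  using assms unfolding identifies_def requested_def tree_path_def by auto

lemma key:
  assumes rt: "rooted_tree V r par" and SV: "S \<subseteq> V"
    and ip: "inj_on \<pi> S" and isg: "inj_on \<sigma> S"
    and id: "identifies V r par S \<pi> \<sigma>" and ur: "unique_request V r par S \<pi> \<sigma>"
    and s: "s \<in> S"
  shows "card (\<pi>`S \<inter> {y. anc V r par s y}) = card (\<sigma>`S \<inter> {y. anc V r par s y})"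
    and "anc V r par s v \<Longrightarrow> v \<noteq> s \<Longrightarrow> anc V r par v (\<pi> s) \<Longrightarrow>
      card (\<pi>`S \<inter> {y. anc V r par v y}) \<noteq> card (\<sigma>`S \<inter> {y. anc V r par v y})"
proof -
  have fin: "finite S" using rt SV finite_subset unfolding rooted_tree_def by blast
  have lca: "\<And>t. t \<in> S \<Longrightarrow> is_lca V r par t (\<pi> t) (\<sigma> t)" using id unfolding identifies_def by auto
  have uniq: "\<And>x t u. x \<in> V \<Longrightarrow> t \<in> S \<Longrightarrow> u \<in> S \<Longrightarrow> requested V r par \<pi> \<sigma> t x
      \<Longrightarrow> requested V r par \<pi> \<sigma> u x \<Longrightarrow> t = u"
    using ur unfolding unique_request_def by blast
  have gen: "\<And>v t. anc V r par s v \<Longrightarrow> anc V r par v (\<pi> s) \<Longrightarrow> t \<in> S \<Longrightarrow> \<not> anc V r par v t \<Longrightarrow>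
      anc V r par v (\<pi> t) \<or> anc V r par v (\<sigma> t) \<Longrightarrow> t = s"
  proof -
    fix v t assume a: "anc V r par s v" "anc V r par v (\<pi> s)" "t \<in> S" "\<not> anc V r par v t"
      "anc V r par v (\<pi> t) \<or> anc V r par v (\<sigma> t)"
    have vV: "v \<in> V" using anc_V a(1) by metis
    have lt: "anc V r par t (\<pi> t)" "anc V r par t (\<sigma> t)" using lca[OF a(3)] unfolding is_lca_def by auto
    have "anc V r par v t \<or> anc V r par t v"
      using a(5) anc_linear[OF _ lt(1), of v] anc_linear[OF _ lt(2), of v] by blast
    then have "anc V r par t v" using a(4) by blast
    then have "requested V r par \<pi> \<sigma> t v" using on_path[OF id a(3) vV] a(5) by blast
    moreover have "requested V r par \<pi> \<sigma> s v" using on_path[OF id s vV a(1)] a(2) by blast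
    ultimately show "t = s" using uniq vV a(3) s by blast
  qed
  define Sv where "Sv v = {t \<in> S. anc V r par v t}" for v
  have sub: "\<And>v. \<pi>`Sv v \<subseteq> {y. anc V r par v y}" "\<And>v. \<sigma>`Sv v \<subseteq> {y. anc V r par v y}"
  proof -
    fix v
    show "\<pi>`Sv v \<subseteq> {y. anc V r par v y}"
    proof
      fix y assume "y \<in> \<pi>`Sv v"
      then obtain t where t: "t \<in> S" "anc V r par v t" "y = \<pi> t" unfolding Sv_def by auto
      have "anc V r par t (\<pi> t)" using lca[OF t(1)] unfolding is_lca_def by simp
      from anc_trans[OF this t(2)] show "y \<in> {y. anc V r par v y}" using t(3) by simp
    qed
    show "\<sigma>`Sv v \<subseteq> {y. anc V r par v y}"
    proof
      fix y assume "y \<in> \<sigma>`Sv v"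
      then obtain t where t: "t \<in> S" "anc V r par v t" "y = \<sigma> t" unfolding Sv_def by auto
      have "anc V r par t (\<sigma> t)" using lca[OF t(1)] unfolding is_lca_def by simp
      from anc_trans[OF this t(2)] show "y \<in> {y. anc V r par v y}" using t(3) by simp
    qed
  qed
  have cS: "\<And>v. card (\<pi>`Sv v) = card (Sv v)" "\<And>v. card (\<sigma>`Sv v) = card (Sv v)"
  proof -
    fix v
    have "Sv v \<subseteq> S" unfolding Sv_def by auto
    then show "card (\<pi>`Sv v) = card (Sv v)" "card (\<sigma>`Sv v) = card (Sv v)"
      using card_image inj_on_subset ip isg by metis+
  qed
  have ss: "anc V r par s s" using s SV by (auto intro: anc.intros)
  have ps: "anc V r par s (\<pi> s)" using lca[OF s] unfolding is_lca_def by auto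
  have "\<pi>`S \<inter> {y. anc V r par s y} = \<pi>`Sv s"
  proof
    show "\<pi>`S \<inter> {y. anc V r par s y} \<subseteq> \<pi>`Sv s"
    proof
      fix y assume "y \<in> \<pi>`S \<inter> {y. anc V r par s y}"
      then obtain t where t: "t \<in> S" "y = \<pi> t" "anc V r par s (\<pi> t)" by auto
      have "anc V r par s t"
      proof (rule ccontr)
        assume "\<not> anc V r par s t"
        with gen[OF ss ps t(1) this] t(3) have "t = s" by blast
        then show False using ss \<open>\<not> anc V r par s t\<close> by simp
      qed
      then show "y \<in> \<pi>`Sv s" using t unfolding Sv_def by auto
    qed
  qed (use sub(1)[of s] Sv_def in auto)
  moreover have "\<sigma>`S \<inter> {y. anc V r par s y} = \<sigma>`Sv s"
  proof
    show "\<sigma>`S \<inter> {y. anc V r par s y} \<subseteq> \<sigma>`Sv s"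
    proof
      fix y assume "y \<in> \<sigma>`S \<inter> {y. anc V r par s y}"
      then obtain t where t: "t \<in> S" "y = \<sigma> t" "anc V r par s (\<sigma> t)" by auto
      have "anc V r par s t"
      proof (rule ccontr)
        assume "\<not> anc V r par s t"
        with gen[OF ss ps t(1) this] t(3) have "t = s" by blast
        then show False using ss \<open>\<not> anc V r par s t\<close> by simp
      qed
      then show "y \<in> \<sigma>`Sv s" using t unfolding Sv_def by auto
    qed
  qed (use sub(2)[of s] Sv_def in auto)
  ultimately show "card (\<pi>`S \<inter> {y. anc V r par s y}) = card (\<sigma>`S \<inter> {y. anc V r par s y})"
    using cS by simp
  assume v: "anc V r par s v" "v \<noteq> s" "anc V r par v (\<pi> s)"
  have nvs: "\<not> anc V r par v s" using anc_antisym[OF rt _ v(1)] v(2) by blast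
  have nsig: "\<not> anc V r par v (\<sigma> s)" using lca[OF s] v nvs unfolding is_lca_def by blast
  have "\<pi>`S \<inter> {y. anc V r par v y} = insert (\<pi> s) (\<pi>`Sv v)"
  proof
    show "\<pi>`S \<inter> {y. anc V r par v y} \<subseteq> insert (\<pi> s) (\<pi>`Sv v)"
    proof
      fix y assume "y \<in> \<pi>`S \<inter> {y. anc V r par v y}"
      then obtain t where t: "t \<in> S" "y = \<pi> t" "anc V r par v (\<pi> t)" by auto
      show "y \<in> insert (\<pi> s) (\<pi>`Sv v)"
      proof (cases "anc V r par v t")
        case True
        then show ?thesis using t unfolding Sv_def by auto
      next
        case False
        with gen[OF v(1) v(3) t(1) False] t(3) have "t = s" by blast
        then show ?thesis using t by simp
      qed
    qed
  qed (use sub(1)[of v] Sv_def v(3) s in auto)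
  moreover have "\<pi> s \<notin> \<pi>`Sv v"
  proof
    assume "\<pi> s \<in> \<pi>`Sv v"
    then obtain t where "t \<in> S" "anc V r par v t" "\<pi> s = \<pi> t" unfolding Sv_def by auto
    then have "t = s" using ip s unfolding inj_on_def by metis
    then show False using nvs \<open>anc V r par v t\<close> by simp
  qed
  moreover have "\<sigma>`S \<inter> {y. anc V r par v y} = \<sigma>`Sv v"
  proof
    show "\<sigma>`S \<inter> {y. anc V r par v y} \<subseteq> \<sigma>`Sv v"
    proof
      fix y assume "y \<in> \<sigma>`S \<inter> {y. anc V r par v y}"
      then obtain t where t: "t \<in> S" "y = \<sigma> t" "anc V r par v (\<sigma> t)" by auto
      have "anc V r par v t"
      proof (rule ccontr)
        assume "\<not> anc V r par v t"
        with gen[OF v(1) v(3) t(1) this] t(3) have "t = s" by blast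
        then show False using nsig t by simp
      qed
      then show "y \<in> \<sigma>`Sv v" using t unfolding Sv_def by auto
    qed
  qed (use sub(2)[of v] Sv_def in auto)
  moreover have "finite (\<pi>`Sv v)" using fin unfolding Sv_def by auto
  ultimately show "card (\<pi>`S \<inter> {y. anc V r par v y}) \<noteq> card (\<sigma>`S \<inter> {y. anc V r par v y})"
    using cS by simp
qed

lemma half:
  assumes rt: "rooted_tree V r par" and SV: "S \<subseteq> V"
    and "inj_on \<pi> S" "inj_on \<sigma> S" "inj_on \<pi>' S" "inj_on \<sigma>' S"
    and "identifies V r par S \<pi> \<sigma>" "unique_request V r par S \<pi> \<sigma>"
    and "identifies V r par S \<pi>' \<sigma>'" "unique_request V r par S \<pi>' \<sigma>'"
    and P: "\<pi> ` S = \<pi>' ` S" and Q: "\<sigma> ` S = \<sigma>' ` S"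
    and s: "s \<in> S"
  shows "\<pi> s = \<pi>' s"
proof -
  note k = key[OF rt SV assms(3,4,7,8)] and k' = key[OF rt SV assms(5,6,9,10)]
  obtain t where t: "t \<in> S" "\<pi>' t = \<pi> s" using P s by (metis image_iff)
  have a1: "anc V r par s (\<pi> s)" using assms(7) s unfolding identifies_def is_lca_def by auto
  have a2: "anc V r par t (\<pi> s)" using assms(9) t unfolding identifies_def is_lca_def by auto
  have "s = t"
  proof (rule ccontr)
    assume ne: "s \<noteq> t"
    from anc_linear[OF a1 a2] show False
    proof
      assume h: "anc V r par s t"
      have "card (\<pi>`S \<inter> {y. anc V r par t y}) \<noteq> card (\<sigma>`S \<inter> {y. anc V r par t y})"
        using k(2)[OF s h ne[symmetric] a2] .
      then show False using k'(1)[OF t(1)] P Q by simp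
    next
      assume h: "anc V r par t s"
      have "anc V r par s (\<pi>' t)" using t(2) a1 by simp
      then have "card (\<pi>'`S \<inter> {y. anc V r par s y}) \<noteq> card (\<sigma>'`S \<inter> {y. anc V r par s y})"
        using k'(2)[OF t(1) h ne] by blast
      then show False using k(1)[OF s] P Q by simp
    qed
  qed
  then show ?thesis using t by simp
qed

theorem lemma3p4:
  fixes V :: "'a set" and r :: 'a and par :: "'a \<Rightarrow> 'a"
    and S :: "'a set" and \<pi> \<sigma> \<pi>' \<sigma>' :: "'a \<Rightarrow> 'a"
  assumes "rooted_tree V r par"
    and "branching V r par"
    and "S \<subseteq> V - leaves V r par"
    and "inj_on \<pi> S" and "\<pi> ` S \<subseteq> leaves V r par"
    and "inj_on \<sigma> S" and "\<sigma> ` S \<subseteq> leaves V r par"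
    and "inj_on \<pi>' S" and "\<pi>' ` S \<subseteq> leaves V r par"
    and "inj_on \<sigma>' S" and "\<sigma>' ` S \<subseteq> leaves V r par"
    and "identifies V r par S \<pi> \<sigma>" and "unique_request V r par S \<pi> \<sigma>"
    and "identifies V r par S \<pi>' \<sigma>'" and "unique_request V r par S \<pi>' \<sigma>'"
    and "\<pi> ` S = \<pi>' ` S" and "\<sigma> ` S = \<sigma>' ` S"
  shows "(\<forall>s \<in> S. \<pi> s = \<pi>' s) \<and> (\<forall>s \<in> S. \<sigma> s = \<sigma>' s)"
proof -
  have SV: "S \<subseteq> V" using assms(3) by auto
  show ?thesis
  proof (intro conjI ballI)
    fix s assume "s \<in> S"
    then show "\<pi> s = \<pi>' s"
      using half[OF assms(1) SV assms(4,6,8,10,12,13,14,15,16,17)] by blast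
  next
    fix s assume "s \<in> S"
    then show "\<sigma> s = \<sigma>' s"
      using half[OF assms(1) SV assms(6,4,10,8) swap(1)[OF assms(12)] swap(2)[OF assms(13)]
          swap(1)[OF assms(14)] swap(2)[OF assms(15)] assms(17,16)] by blast
  qed
qed

end
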